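(* Let $D=(V,A)$ be a digraph, $k\in\mathbb{N}$, and $\mathcal{B}_i=(V_i,A_i)$ $(i<k)$ pairwise edge-disjoint branchings in $D$ such that for every nonempty $X\subseteq V$, $\varrho_{D\setminus\!\setminus\mathcal{B}}(X)\geq|\{i<k:V_i\cap X=\varnothing\}|$. Let $B_1\subseteq B_0$ be dangerous sets with $\varrho_{D\setminus\!\setminus\mathcal{B}}(B_0)=\varrho_{D\setminus\!\setminus\mathcal{B}}(B_1)=l\geq1$. Let $\{e_1,\dots,e_l\}$ be the set of edges of $D\setminus\!\setminus\mathcal{B}$ entering $B_0$ and let $s_j$ be the head of $e_j$. Then there is a system of pairwise edge-disjoint paths $\{P_j\}_{j=1}^{l}$ in $(D\setminus\!\setminus\mathcal{B})[B_0]$ such that $P_j$ goes from $s_j$ to $B_1$. Moreover, any such path system contains every edge of $D\setminus\!\setminus\mathcal{B}$ with tail in $B_0\setminus B_1$ and head in $B_1$, and the multiset of the last vertices of the paths $P_j$ equals the multiset of heads of the edges of $D\setminus\!\setminus\mathcal{B}$ entering $B_1$.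
   Context: Digraphs may be of arbitrary cardinality with multiple edges. A branching is a digraph whose weakly connected components are arborescences (directed trees in which every vertex is reachable from the root). $D\setminus\!\setminus\mathcal{B}=(V,A\setminus\bigcup_{i<k}A_i)$; $H[B]$ is the subgraph of $H$ spanned by $B$. $\varrho_H(X)$ is the cardinality of the set of edges of $H$ with tail outside $X$ and head in $X$ (these are the edges entering $X$). A nonempty set $X\subseteq V$ is tight if $\varrho_{D\setminus\!\setminus\mathcal{B}}(X)=|\{i<k:V_i\cap X=\varnothing\}|$, and dangerous if it is tight and $X\cap V_0\neq\varnothing$. Paths are directed simple paths; a path $P$ goes from $X$ to $Y$ if $V(P)\cap X=\{\mathrm{start}(P)\}$ and $V(P)\cap Y=\{\mathrm{end}(P)\}$ (start and end may coincide; for a vertex $x$, "from $x$" means from $\{x\}$). *)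

theory Defs
  imports Main "HOL-Library.Extended_Nat" "HOL-Library.Multiset"
begin

text \<open>A digraph is given by a vertex set V, an edge set A (edges are abstract
objects, so multiple edges are allowed) and tail/head maps tail, head.
A sub(di)graph is given by a pair (W, F).\<close>

definition in_edges :: "('e \<Rightarrow> 'v) \<Rightarrow> ('e \<Rightarrow> 'v) \<Rightarrow> 'e set \<Rightarrow> 'v set \<Rightarrow> 'e set" where
  "in_edges tail head F X = {e \<in> F. tail e \<notin> X \<and> head e \<in> X}"

definition rho :: "('e \<Rightarrow> 'v) \<Rightarrow> ('e \<Rightarrow> 'v) \<Rightarrow> 'e set \<Rightarrow> 'v set \<Rightarrow> enat" where
  "rho tail head F X = (if finite (in_edges tail head F X) then enat (card (in_edges tail head F X)) else \<infinity>)"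

definition rest_edges :: "'e set \<Rightarrow> (nat \<Rightarrow> 'e set) \<Rightarrow> nat \<Rightarrow> 'e set" where
  "rest_edges A As k = A - (\<Union>i<k. As i)"

definition induced_edges :: "('e \<Rightarrow> 'v) \<Rightarrow> ('e \<Rightarrow> 'v) \<Rightarrow> 'e set \<Rightarrow> 'v set \<Rightarrow> 'e set" where
  "induced_edges tail head F B = {e \<in> F. tail e \<in> B \<and> head e \<in> B}"

definition arc_rel :: "('e \<Rightarrow> 'v) \<Rightarrow> ('e \<Rightarrow> 'v) \<Rightarrow> 'e set \<Rightarrow> ('v \<times> 'v) set" where
  "arc_rel tail head F = {(tail e, head e) | e. e \<in> F}"

definition wcomp :: "('e \<Rightarrow> 'v) \<Rightarrow> ('e \<Rightarrow> 'v) \<Rightarrow> 'v set \<Rightarrow> 'e set \<Rightarrow> 'v \<Rightarrow> 'v set" where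
  "wcomp tail head W F x = {y \<in> W. (x, y) \<in> (arc_rel tail head F \<union> (arc_rel tail head F)\<inverse>)\<^sup>*}"

definition arborescence :: "('e \<Rightarrow> 'v) \<Rightarrow> ('e \<Rightarrow> 'v) \<Rightarrow> 'v set \<Rightarrow> 'e set \<Rightarrow> bool" where
  "arborescence tail head C F \<longleftrightarrow>
     (\<forall>e\<in>F. tail e \<in> C \<and> head e \<in> C) \<and>
     (\<exists>r\<in>C. (\<forall>e\<in>F. head e \<noteq> r) \<and>
            (\<forall>v\<in>C - {r}. \<exists>!e. e \<in> F \<and> head e = v) \<and>
            (\<forall>v\<in>C. (r, v) \<in> (arc_rel tail head F)\<^sup>*))"

definition branching :: "('e \<Rightarrow> 'v) \<Rightarrow> ('e \<Rightarrow> 'v) \<Rightarrow> 'v set \<Rightarrow> 'e set \<Rightarrow> bool" where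
  "branching tail head W F \<longleftrightarrow>
     (\<forall>e\<in>F. tail e \<in> W \<and> head e \<in> W) \<and>
     (\<forall>x\<in>W. arborescence tail head (wcomp tail head W F x) {e \<in> F. tail e \<in> wcomp tail head W F x})"

definition tight :: "('e \<Rightarrow> 'v) \<Rightarrow> ('e \<Rightarrow> 'v) \<Rightarrow> 'v set \<Rightarrow> 'e set \<Rightarrow> nat \<Rightarrow> (nat \<Rightarrow> 'v set)
    \<Rightarrow> (nat \<Rightarrow> 'e set) \<Rightarrow> 'v set \<Rightarrow> bool" where
  "tight tail head V A k Vs As X \<longleftrightarrow> X \<noteq> {} \<and> X \<subseteq> V \<and>
     rho tail head (rest_edges A As k) X = enat (card {i. i < k \<and> Vs i \<inter> X = {}})"

definition dangerous :: "('e \<Rightarrow> 'v) \<Rightarrow> ('e \<Rightarrow> 'v) \<Rightarrow> 'v set \<Rightarrow> 'e set \<Rightarrow> nat \<Rightarrow> (nat \<Rightarrow> 'v set)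
    \<Rightarrow> (nat \<Rightarrow> 'e set) \<Rightarrow> 'v set \<Rightarrow> bool" where
  "dangerous tail head V A k Vs As X \<longleftrightarrow> tight tail head V A k Vs As X \<and> X \<inter> Vs 0 \<noteq> {}"

text \<open>Paths: a start vertex v and a list of edges es; vertex sequence v, head es1, ...\<close>
definition path_verts :: "('e \<Rightarrow> 'v) \<Rightarrow> 'v \<Rightarrow> 'e list \<Rightarrow> 'v list" where
  "path_verts head v es = v # map head es"

definition is_path :: "('e \<Rightarrow> 'v) \<Rightarrow> ('e \<Rightarrow> 'v) \<Rightarrow> 'v set \<Rightarrow> 'e set \<Rightarrow> 'v \<times> 'e list \<Rightarrow> bool" where
  "is_path tail head W F P \<longleftrightarrow>
     set (snd P) \<subseteq> F \<and> set (path_verts head (fst P) (snd P)) \<subseteq> W \<and>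
     (\<forall>i < length (snd P). tail (snd P ! i) = path_verts head (fst P) (snd P) ! i) \<and>
     distinct (path_verts head (fst P) (snd P))"

definition path_start :: "'v \<times> 'e list \<Rightarrow> 'v" where
  "path_start P = fst P"

definition path_end :: "('e \<Rightarrow> 'v) \<Rightarrow> 'v \<times> 'e list \<Rightarrow> 'v" where
  "path_end head P = last (path_verts head (fst P) (snd P))"

definition goes_from_to :: "('e \<Rightarrow> 'v) \<Rightarrow> 'v \<times> 'e list \<Rightarrow> 'v set \<Rightarrow> 'v set \<Rightarrow> bool" where
  "goes_from_to head P X Y \<longleftrightarrow>
     set (path_verts head (fst P) (snd P)) \<inter> X = {path_start P} \<and>
     set (path_verts head (fst P) (snd P)) \<inter> Y = {path_end head P}"

text \<open>A path system indexed by the edges entering B0 (the edges e_1..e_l):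
pairwise edge-disjoint paths in H[B0], P e going from head e to B1.\<close>
definition good_path_system :: "('e \<Rightarrow> 'v) \<Rightarrow> ('e \<Rightarrow> 'v) \<Rightarrow> 'e set \<Rightarrow> 'v set \<Rightarrow> 'v set
    \<Rightarrow> ('e \<Rightarrow> 'v \<times> 'e list) \<Rightarrow> bool" where
  "good_path_system tail head H B0 B1 P \<longleftrightarrow>
     (\<forall>e\<in>in_edges tail head H B0.
        is_path tail head B0 (induced_edges tail head H B0) (P e) \<and>
        goes_from_to head (P e) {head e} B1) \<and>
     (\<forall>e\<in>in_edges tail head H B0. \<forall>e'\<in>in_edges tail head H B0.
        e \<noteq> e' \<longrightarrow> set (snd (P e)) \<inter> set (snd (P e')) = {})"

end

theory Submission
  imports Defs
begin


fun gwalk :: "('s \<Rightarrow> bool) \<Rightarrow> ('s \<Rightarrow> 'v) \<Rightarrow> ('s \<Rightarrow> 'v) \<Rightarrow> 'v \<Rightarrow> 's list \<Rightarrow> 'v \<Rightarrow> bool" where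
  "gwalk ok st en u [] v = (u = v)"
| "gwalk ok st en u (x#xs) v = (ok x \<and> st x = u \<and> gwalk ok st en (en x) xs v)"

lemma gwalk_append:
  "gwalk ok st en u (xs @ ys) v \<longleftrightarrow> (\<exists>w. gwalk ok st en u xs w \<and> gwalk ok st en w ys v)"
  by (induction xs arbitrary: u) auto

lemma gwalk_ok: "gwalk ok st en u xs v \<Longrightarrow> x \<in> set xs \<Longrightarrow> ok x"
  by (induction xs arbitrary: u) auto

lemma gwalk_mono: "gwalk ok st en u xs v \<Longrightarrow> (\<And>x. x \<in> set xs \<Longrightarrow> ok x \<Longrightarrow> ok' x) \<Longrightarrow> gwalk ok' st en u xs v"
  by (induction xs arbitrary: u) auto

lemma gwalk_shorten:
  assumes "gwalk ok st en u xs v" "v \<in> T"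
  shows "\<exists>ys v'. gwalk ok st en u ys v' \<and> v' \<in> T \<and> distinct (map st ys) \<and> (\<forall>x\<in>set ys. st x \<notin> T)"
  using assms
proof (induction "length xs" arbitrary: xs v rule: less_induct)
  case less
  show ?case
  proof (cases "\<exists>x\<in>set xs. st x \<in> T")
    case True
    then obtain x where x: "x \<in> set xs" "st x \<in> T" by blast
    then obtain as bs where xs: "xs = as @ x # bs" by (meson split_list)
    with less.prems obtain w where "gwalk ok st en u as w" "gwalk ok st en w (x#bs) v"
      using gwalk_append by metis
    hence "gwalk ok st en u as (st x)" by simp
    moreover have "length as < length xs" using xs by simp
    ultimately show ?thesis using less.hyps x by blast
  next
    case False
    show ?thesis
    proof (cases "distinct (map st xs)")
      case True
      then show ?thesis using False less.prems by blast
    next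
      case nd: False
      obtain a b c y where d: "map st xs = a @ [y] @ b @ [y] @ c"
        using not_distinct_decomp[OF nd] by blast
      then obtain xs1 r1 where "xs = xs1 @ r1" "map st xs1 = a" "map st r1 = [y] @ b @ [y] @ c"
        by (auto simp: map_eq_append_conv)
      then obtain x1 r2 where "r1 = x1 # r2" "st x1 = y" "map st r2 = b @ [y] @ c"
        by (auto simp: map_eq_append_conv Cons_eq_map_conv)
      then obtain xs2 r3 where "r2 = xs2 @ r3" "map st r3 = [y] @ c"
        by (auto simp: map_eq_append_conv)
      then obtain x2 xs3 where "r3 = x2 # xs3" "st x2 = y"
        by (auto simp: Cons_eq_map_conv)
      have xs: "xs = xs1 @ x1 # xs2 @ x2 # xs3"
        using \<open>xs = xs1 @ r1\<close> \<open>r1 = x1 # r2\<close> \<open>r2 = xs2 @ r3\<close> \<open>r3 = x2 # xs3\<close> by simp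
      from less.prems(1) obtain w where w1: "gwalk ok st en u xs1 w" and w2: "gwalk ok st en w (x1 # xs2 @ x2 # xs3) v"
        unfolding xs using gwalk_append by metis
      from w2 have "w = st x1" by simp
      from w2 obtain w' where "gwalk ok st en w (x1 # xs2) w'" "gwalk ok st en w' (x2 # xs3) v"
        using gwalk_append[of ok st en w "x1 # xs2" "x2 # xs3" v] by auto
      hence "w' = st x2" "gwalk ok st en w' (x2 # xs3) v" by simp_all
      hence "gwalk ok st en u (xs1 @ x2 # xs3) v" using w1 \<open>w = st x1\<close> \<open>st x1 = y\<close> \<open>st x2 = y\<close>
        using gwalk_append by metis
      moreover have "length (xs1 @ x2 # xs3) < length xs" using xs by simp
      ultimately show ?thesis using less.hyps less.prems(2) by blast
    qed
  qed
qed

lemma card_fibers: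
  assumes "finite F" "finite R"
  shows "(\<Sum>v\<in>R. card {e\<in>F. f e = v}) = card {e\<in>F. f e \<in> R}"
proof -
  have "{e\<in>F. f e \<in> R} = (\<Union>v\<in>R. {e\<in>F. f e = v})" by auto
  moreover have "card (\<Union>v\<in>R. {e\<in>F. f e = v}) = (\<Sum>v\<in>R. card {e\<in>F. f e = v})"
    by (rule card_UN_disjoint) (use assms in auto)
  ultimately show ?thesis by simp
qed




lemma card_insert_filter: "finite F \<Longrightarrow> e \<notin> F \<Longrightarrow>
  card {x\<in>insert e F. P x} = card {x\<in>F. P x} + (if P e then 1 else 0)"
proof -
  assume a: "finite F" "e \<notin> F"
  show ?thesis
  proof (cases "P e")
    case True
    hence "{x\<in>insert e F. P x} = insert e {x\<in>F. P x}" by auto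
    thus ?thesis using a True by simp
  next
    case False
    hence "{x\<in>insert e F. P x} = {x\<in>F. P x}" by auto
    thus ?thesis using False by simp
  qed
qed


lemma card_remove_filter: "finite F \<Longrightarrow> e \<in> F \<Longrightarrow>
  int (card {x\<in>F - {e}. P x}) = int (card {x\<in>F. P x}) - (if P e then 1 else 0)"
proof -
  assume a: "finite F" "e \<in> F"
  show ?thesis
  proof (cases "P e")
    case True
    hence "{x\<in>F - {e}. P x} = {x\<in>F. P x} - {e}" "e \<in> {x\<in>F. P x}" using a by auto
    moreover have "finite {x\<in>F. P x}" using a by simp
    ultimately have "card {x\<in>F - {e}. P x} = card {x\<in>F. P x} - 1" "card {x\<in>F. P x} > 0"
      by (auto simp: card_Diff_singleton card_gt_0_iff)
    thus ?thesis using True by (simp add: of_nat_diff)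
  next
    case False
    hence "{x\<in>F - {e}. P x} = {x\<in>F. P x}" by auto
    thus ?thesis using False by simp
  qed
qed

locale mg =
  fixes tail head :: "'e \<Rightarrow> 'v" and H :: "'e set" and W T :: "'v set"
  assumes TW: "T \<subseteq> W" and finS: "finite (in_edges tail head H W)"
    and cut: "\<And>X. T \<subseteq> X \<Longrightarrow> X \<subseteq> W \<Longrightarrow> enat (card (in_edges tail head H W)) \<le> rho tail head H X"
begin

definition "S = in_edges tail head H W"
definition "E = induced_edges tail head H W"

definition exc :: "'e set \<Rightarrow> 'e set \<Rightarrow> 'v \<Rightarrow> int" where
  "exc F S' v = int (card {e\<in>F. head e = v}) + int (card {s\<in>S'. head s = v}) - int (card {e\<in>F. tail e = v})"

definition "isflow F S' \<longleftrightarrow> finite F \<and> F \<subseteq> E \<and> S' \<subseteq> S \<and> (\<forall>v\<in>W-T. exc F S' v = 0)"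

definition "valid F x = (if snd x then fst x \<in> E \<and> fst x \<notin> F else fst x \<in> F)"
definition "rst x = (if snd x then tail (fst x) else head (fst x))"
definition "ren x = (if snd x then head (fst x) else tail (fst x))"

lemma finiteS: "finite S" using finS S_def by simp

lemma S_props: "s \<in> S \<Longrightarrow> s \<in> H \<and> tail s \<notin> W \<and> head s \<in> W"
  by (auto simp: S_def in_edges_def)
lemma E_props: "e \<in> E \<Longrightarrow> e \<in> H \<and> tail e \<in> W \<and> head e \<in> W"
  by (auto simp: E_def induced_edges_def)

lemma exc_insert: "finite F \<Longrightarrow> e \<notin> F \<Longrightarrow>
   exc (insert e F) S' v = exc F S' v + (if head e = v then 1 else 0) - (if tail e = v then 1 else 0)"
proof -
  assume a: "finite F" "e \<notin> F"
  show ?thesis unfolding exc_def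
    using card_insert_filter[OF a, of "\<lambda>x. head x = v"] card_insert_filter[OF a, of "\<lambda>x. tail x = v"]
    by (simp only:) simp
qed

lemma exc_remove: "finite F \<Longrightarrow> e \<in> F \<Longrightarrow>
   exc (F - {e}) S' v = exc F S' v - (if head e = v then 1 else 0) + (if tail e = v then 1 else 0)"
proof -
  assume a: "finite F" "e \<in> F"
  show ?thesis unfolding exc_def
    using card_remove_filter[OF a, of "\<lambda>x. head x = v"] card_remove_filter[OF a, of "\<lambda>x. tail x = v"]
    by (simp only:)
qed

lemma exc_insert_src: "finite S' \<Longrightarrow> s \<notin> S' \<Longrightarrow>
   exc F (insert s S') v = exc F S' v + (if head s = v then 1 else 0)"
proof -
  assume a: "finite S'" "s \<notin> S'"
  show ?thesis unfolding exc_def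
    using card_insert_filter[OF a, of "\<lambda>x. head x = v"]
    by (simp only:) simp
qed

lemma augment:
  assumes "finite F" "F \<subseteq> E" "\<forall>v\<in>W-T. exc F S' v = (if v = u then 1 else 0)"
    "gwalk (valid F) rst ren u xs t" "t \<in> T" "distinct (map rst xs)"
  shows "\<exists>F'. finite F' \<and> F' \<subseteq> E \<and> (\<forall>v\<in>W-T. exc F' S' v = 0)"
  using assms
proof (induction xs arbitrary: F u)
  case Nil
  then show ?case by auto
next
  case (Cons x xs)
  obtain e d where x: "x = (e, d)" by force
  show ?case
  proof (cases d)
    case True
    have g: "valid F x" "rst x = u" "gwalk (valid F) rst ren (ren x) xs t" using Cons.prems(4) by simp_all
    have e: "e \<in> E" "e \<notin> F" "tail e = u" using g(1,2) True x by (auto simp: valid_def rst_def)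
    have w: "gwalk (valid F) rst ren (head e) xs t" using g(3) True x by (simp add: ren_def)
    let ?F = "insert e F"
    have f4: "gwalk (valid ?F) rst ren (head e) xs t"
    proof (rule gwalk_mono[OF w])
      fix y assume y: "y \<in> set xs" "valid F y"
      have "rst x \<notin> rst ` set xs" using Cons.prems(6) by simp
      hence "rst y \<noteq> u" using g(2) y(1) by (metis image_eqI)
      obtain e' d' where y': "y = (e', d')" by force
      thus "valid ?F y" using y e \<open>rst y \<noteq> u\<close> by (cases d') (auto simp: valid_def rst_def)
    qed
    moreover have f3: "\<forall>v\<in>W-T. exc ?F S' v = (if v = head e then 1 else 0)"
    proof
      fix v assume v: "v \<in> W - T"
      have "exc ?F S' v = exc F S' v + (if head e = v then 1 else 0) - (if tail e = v then 1 else 0)"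
        using exc_insert Cons.prems(1) e(2) by blast
      moreover have "exc F S' v = (if v = u then 1 else 0)" using Cons.prems(3) v by blast
      ultimately show "exc ?F S' v = (if v = head e then 1 else 0)" using e(3) by auto
    qed
    moreover have f1: "finite (insert e F)" using Cons.prems(1) by simp
    moreover have f2: "insert e F \<subseteq> E" using Cons.prems(2) e by auto
    moreover have f5: "distinct (map rst xs)" using Cons.prems(6) by simp
    show ?thesis by (rule Cons.IH[OF f1 f2 f3 f4 Cons.prems(5) f5])
  next
    case False
    have g: "valid F x" "rst x = u" "gwalk (valid F) rst ren (ren x) xs t" using Cons.prems(4) by simp_all
    have e: "e \<in> F" "head e = u" using g(1,2) False x by (auto simp: valid_def rst_def)
    have w: "gwalk (valid F) rst ren (tail e) xs t" using g(3) False x by (simp add: ren_def)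
    let ?F = "F - {e}"
    have f4: "gwalk (valid ?F) rst ren (tail e) xs t"
    proof (rule gwalk_mono[OF w])
      fix y assume y: "y \<in> set xs" "valid F y"
      have "rst x \<notin> rst ` set xs" using Cons.prems(6) by simp
      hence "rst y \<noteq> u" using g(2) y(1) by (metis image_eqI)
      obtain e' d' where y': "y = (e', d')" by force
      thus "valid ?F y" using y e \<open>rst y \<noteq> u\<close> by (cases d') (auto simp: valid_def rst_def)
    qed
    moreover have f3: "\<forall>v\<in>W-T. exc ?F S' v = (if v = tail e then 1 else 0)"
    proof
      fix v assume v: "v \<in> W - T"
      have "exc ?F S' v = exc F S' v - (if head e = v then 1 else 0) + (if tail e = v then 1 else 0)"
        using exc_remove Cons.prems(1) e(1) by blast
      moreover have "exc F S' v = (if v = u then 1 else 0)" using Cons.prems(3) v by blast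
      ultimately show "exc ?F S' v = (if v = tail e then 1 else 0)" using e(2) by auto
    qed
    moreover have f1: "finite (F - {e})" using Cons.prems(1) by simp
    moreover have f2: "F - {e} \<subseteq> E" using Cons.prems(2) e by auto
    moreover have f5: "distinct (map rst xs)" using Cons.prems(6) by simp
    show ?thesis by (rule Cons.IH[OF f1 f2 f3 f4 Cons.prems(5) f5])
  qed
qed

end


context mg begin

lemma flow_sum:
  assumes fl: "isflow F S'" and R: "R \<subseteq> W - T"
  shows "card {e\<in>F. head e \<in> R} + card {s\<in>S'. head s \<in> R} = card {e\<in>F. tail e \<in> R}"
proof -
  let ?R = "R \<inter> (head ` F \<union> tail ` F \<union> head ` S')"
  have fF: "finite F" using fl by (simp add: isflow_def)
  have fS: "finite S'" using fl finiteS by (auto simp: isflow_def intro: finite_subset)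
  have fR: "finite ?R" using fF fS by auto
  have "(\<Sum>v\<in>?R. exc F S' v) = 0" using fl R by (intro sum.neutral) (auto simp: isflow_def)
  moreover have "(\<Sum>v\<in>?R. exc F S' v) = int (\<Sum>v\<in>?R. card {e\<in>F. head e = v}) + int (\<Sum>v\<in>?R. card {s\<in>S'. head s = v})
      - int (\<Sum>v\<in>?R. card {e\<in>F. tail e = v})"
    by (simp add: exc_def sum.distrib sum_subtractf)
  moreover have "(\<Sum>v\<in>?R. card {e\<in>F. head e = v}) = card {e\<in>F. head e \<in> R}"
  proof -
    have "(\<Sum>v\<in>?R. card {e\<in>F. head e = v}) = card {e\<in>F. head e \<in> ?R}" by (rule card_fibers[OF fF fR])
    moreover have "{e\<in>F. head e \<in> ?R} = {e\<in>F. head e \<in> R}" by auto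
    ultimately show ?thesis by simp
  qed
  moreover have "(\<Sum>v\<in>?R. card {e\<in>F. tail e = v}) = card {e\<in>F. tail e \<in> R}"
  proof -
    have "(\<Sum>v\<in>?R. card {e\<in>F. tail e = v}) = card {e\<in>F. tail e \<in> ?R}" by (rule card_fibers[OF fF fR])
    moreover have "{e\<in>F. tail e \<in> ?R} = {e\<in>F. tail e \<in> R}" by auto
    ultimately show ?thesis by simp
  qed
  moreover have "(\<Sum>v\<in>?R. card {s\<in>S'. head s = v}) = card {s\<in>S'. head s \<in> R}"
  proof -
    have "(\<Sum>v\<in>?R. card {s\<in>S'. head s = v}) = card {s\<in>S'. head s \<in> ?R}" by (rule card_fibers[OF fS fR])
    moreover have "{s\<in>S'. head s \<in> ?R} = {s\<in>S'. head s \<in> R}" by auto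
    ultimately show ?thesis by simp
  qed
  ultimately show ?thesis by linarith
qed

lemma rwalk_W: "gwalk (valid F) rst ren u xs v \<Longrightarrow> u \<in> W \<Longrightarrow> F \<subseteq> E \<Longrightarrow> v \<in> W"
proof (induction xs arbitrary: u)
  case Nil
  then show ?case by simp
next
  case (Cons x xs)
  obtain e d where x: "x = (e, d)" by force
  have "e \<in> E" using Cons.prems x by (auto simp: valid_def split: if_splits)
  hence "ren x \<in> W" using x E_props by (auto simp: ren_def)
  thus ?case using Cons by auto
qed

lemma augment_step:
  assumes fl: "isflow F S'" and ne: "S' \<noteq> S"
  shows "\<exists>F' s. s \<in> S - S' \<and> isflow F' (insert s S')"
proof -
  have fF: "finite F" and FE: "F \<subseteq> E" and SS: "S' \<subseteq> S" and cons: "\<forall>v\<in>W-T. exc F S' v = 0"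
    using fl by (auto simp: isflow_def)
  have fS: "finite S'" using SS finiteS by (auto intro: finite_subset)
  define R where "R = {v. \<exists>s\<in>S-S'. \<exists>xs. gwalk (valid F) rst ren (head s) xs v}"
  show ?thesis
  proof (cases "R \<inter> T = {}")
    case False
    then obtain s xs t where s: "s \<in> S - S'" and w: "gwalk (valid F) rst ren (head s) xs t" and t: "t \<in> T"
      unfolding R_def by blast
    from gwalk_shorten[OF w t] obtain ys t' where w': "gwalk (valid F) rst ren (head s) ys t'" "t' \<in> T"
      "distinct (map rst ys)" by blast
    have "\<forall>v\<in>W-T. exc F (insert s S') v = (if v = head s then 1 else 0)"
    proof
      fix v assume v: "v \<in> W - T"
      have "exc F (insert s S') v = exc F S' v + (if head s = v then 1 else 0)"
        using exc_insert_src fS s by blast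
      thus "exc F (insert s S') v = (if v = head s then 1 else 0)" using cons v by auto
    qed
    from augment[OF fF FE this w'] obtain F' where "finite F'" "F' \<subseteq> E" "\<forall>v\<in>W-T. exc F' (insert s S') v = 0"
      by blast
    thus ?thesis using s SS by (auto simp: isflow_def)
  next
    case True
    have RW: "R \<subseteq> W" unfolding R_def using rwalk_W FE S_props by blast
    define X where "X = W - R"
    have TX: "T \<subseteq> X" using True TW X_def by auto
    have XW: "X \<subseteq> W" using X_def by auto
    define I where "I = {e\<in>E. tail e \<in> R \<and> head e \<notin> R}"
    have IF: "I \<subseteq> F"
    proof
      fix e assume e: "e \<in> I"
      show "e \<in> F"
      proof (rule ccontr)
        assume n: "e \<notin> F"
        from e obtain s xs where s: "s \<in> S - S'" "gwalk (valid F) rst ren (head s) xs (tail e)"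
          unfolding I_def R_def by blast
        have "gwalk (valid F) rst ren (head s) (xs @ [(e, True)]) (head e)"
          using s e n unfolding gwalk_append I_def by (auto simp: valid_def rst_def ren_def)
        hence "head e \<in> R" using s unfolding R_def by blast
        thus False using e I_def by blast
      qed
    qed
    have HR: "\<forall>e\<in>F. head e \<in> R \<longrightarrow> tail e \<in> R"
    proof (intro ballI impI)
      fix e assume e: "e \<in> F" "head e \<in> R"
      from e obtain s xs where s: "s \<in> S - S'" "gwalk (valid F) rst ren (head s) xs (head e)"
        unfolding R_def by blast
      have "gwalk (valid F) rst ren (head s) (xs @ [(e, False)]) (tail e)"
        using s e unfolding gwalk_append by (auto simp: valid_def rst_def ren_def)
      thus "tail e \<in> R" using s unfolding R_def by blast
    qed
    have SX: "{s\<in>S. head s \<in> X} = {s\<in>S'. head s \<in> X}"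
    proof -
      have "s \<in> S' " if "s \<in> S" "head s \<in> X" for s
      proof (rule ccontr)
        assume "s \<notin> S'"
        hence "head s \<in> R" unfolding R_def using that by (auto intro!: bexI[of _ s] exI[of _ "[]"])
        thus False using that X_def by auto
      qed
      thus ?thesis using SS by auto
    qed
    have ie: "in_edges tail head H X = {s\<in>S. head s \<in> X} \<union> I"
      unfolding in_edges_def I_def S_def E_def induced_edges_def X_def using RW by auto
    have finI: "finite I" using IF fF by (auto intro: finite_subset)
    have finSX: "finite {s\<in>S. head s \<in> X}" using finiteS by auto
    have fs: "card {e\<in>F. head e \<in> R} + card {s\<in>S'. head s \<in> R} = card {e\<in>F. tail e \<in> R}"
      using flow_sum[OF fl] RW True by blast
    have "{e\<in>F. tail e \<in> R} = {e\<in>F. head e \<in> R} \<union> I" using HR IF FE unfolding I_def by auto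
    moreover have "{e\<in>F. head e \<in> R} \<inter> I = {}" unfolding I_def by auto
    ultimately have "card {e\<in>F. tail e \<in> R} = card {e\<in>F. head e \<in> R} + card I"
      using fF finI by (simp add: card_Un_disjoint)
    hence cI: "card I = card {s\<in>S'. head s \<in> R}" using fs by linarith
    have "S' = {s\<in>S'. head s \<in> X} \<union> {s\<in>S'. head s \<in> R}" using SS S_props X_def by auto
    moreover have "{s\<in>S'. head s \<in> X} \<inter> {s\<in>S'. head s \<in> R} = {}" using X_def by auto
    ultimately have cS': "card S' = card {s\<in>S'. head s \<in> X} + card {s\<in>S'. head s \<in> R}"
      using fS by (metis (no_types, lifting) card_Un_disjoint finite_Un)
    have fin_ie: "finite (in_edges tail head H X)" using ie finI finSX by simp
    have "card (in_edges tail head H X) \<le> card {s\<in>S. head s \<in> X} + card I"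
      unfolding ie using card_Un_le by blast
    also have "\<dots> = card S'" using SX cI cS' by simp
    also have "\<dots> < card S" using SS ne finiteS by (simp add: psubset_card_mono psubset_eq)
    finally have lt: "card (in_edges tail head H X) < card S" .
    have "enat (card S) \<le> rho tail head H X" using cut[OF TX XW] S_def by simp
    also have "\<dots> = enat (card (in_edges tail head H X))" using fin_ie by (simp add: rho_def)
    finally show ?thesis using lt by simp
  qed
qed

lemma flow_exists: "\<exists>F. isflow F S"
proof -
  have "\<And>m. m \<le> card S \<Longrightarrow> \<exists>F S'. isflow F S' \<and> card S' = m"
  proof -
    fix m show "m \<le> card S \<Longrightarrow> \<exists>F S'. isflow F S' \<and> card S' = m"
    proof (induction m)
      case 0
      have "isflow {} {}" by (simp add: isflow_def exc_def)
      then show ?case by force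
    next
      case (Suc m)
      then obtain F S' where fl: "isflow F S'" "card S' = m" by auto
      hence "S' \<noteq> S" using Suc.prems by auto
      from augment_step[OF fl(1) this] obtain F' s where "s \<in> S - S'" "isflow F' (insert s S')" by blast
      moreover have "finite S'" using fl finiteS by (auto simp: isflow_def intro: finite_subset)
      ultimately show ?case using fl by (intro exI[of _ F'] exI[of _ "insert s S'"]) auto
    qed
  qed
  then obtain F S' where "isflow F S'" "card S' = card S" by blast
  moreover hence "S' = S" using finiteS by (metis card_subset_eq isflow_def)
  ultimately show ?thesis by blast
qed

end



lemma card_diff_filter: "finite F \<Longrightarrow> A \<subseteq> F \<Longrightarrow>
  int (card {x\<in>F - A. P x}) = int (card {x\<in>F. P x}) - int (card {x\<in>A. P x})"
proof -
  assume a: "finite F" "A \<subseteq> F"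
  have "{x\<in>F - A. P x} = {x\<in>F. P x} - {x\<in>A. P x}" by auto
  moreover have "{x\<in>A. P x} \<subseteq> {x\<in>F. P x}" using a by auto
  moreover have "finite {x\<in>A. P x}" using a by (auto intro: finite_subset)
  ultimately show ?thesis using a by (simp add: card_Diff_subset card_mono of_nat_diff)
qed

context mg begin

lemma fwalk_count:
  "gwalk (\<lambda>e. e \<in> F) tail head u es v \<Longrightarrow> distinct es \<Longrightarrow>
   int (card {e\<in>set es. head e = x}) - int (card {e\<in>set es. tail e = x})
     = (if x = v then 1 else 0) - (if x = u then 1 else 0)"
proof (induction es arbitrary: u)
  case Nil
  then show ?case by simp
next
  case (Cons e es)
  have IH: "int (card {e\<in>set es. head e = x}) - int (card {e\<in>set es. tail e = x})
     = (if x = v then 1 else 0) - (if x = head e then 1 else 0)" using Cons by auto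
  have "set (e # es) = insert e (set es)" "e \<notin> set es" using Cons.prems by auto
  hence "card {y\<in>set (e#es). head y = x} = card {y\<in>set es. head y = x} + (if head e = x then 1 else 0)"
    "card {y\<in>set (e#es). tail y = x} = card {y\<in>set es. tail y = x} + (if tail e = x then 1 else 0)"
    using card_insert_filter[of "set es" e "\<lambda>y. head y = x"] card_insert_filter[of "set es" e "\<lambda>y. tail y = x"]
    by simp_all
  moreover have "tail e = u" using Cons.prems by simp
  ultimately show ?case using IH by auto
qed

lemma fwalk_W: "gwalk (\<lambda>e. e \<in> F) tail head u es v \<Longrightarrow> u \<in> W \<Longrightarrow> F \<subseteq> E \<Longrightarrow> v \<in> W \<and> set es \<subseteq> F"
  by (induction es arbitrary: u) (auto dest!: E_props)

lemma decompose:
  assumes "isflow F S'"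
  shows "\<exists>P. (\<forall>s\<in>S'. set (P s) \<subseteq> F \<and> distinct (map tail (P s)) \<and> (\<forall>x\<in>set (P s). tail x \<notin> T) \<and>
              (\<exists>v\<in>T. gwalk (\<lambda>e. e \<in> F) tail head (head s) (P s) v)) \<and>
            (\<forall>s\<in>S'. \<forall>s'\<in>S'. s \<noteq> s' \<longrightarrow> set (P s) \<inter> set (P s') = {})"
proof -
  have "finite S'" using assms finiteS by (auto simp: isflow_def intro: finite_subset)
  thus ?thesis using assms
  proof (induction S' arbitrary: F rule: finite_induct)
    case empty
    then show ?case by auto
  next
    case (insert s S0)
    have fF: "finite F" and FE: "F \<subseteq> E" and SS: "insert s S0 \<subseteq> S"
      and cons: "\<forall>v\<in>W-T. exc F (insert s S0) v = 0" using insert.prems by (auto simp: isflow_def)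
    have sW: "head s \<in> W" using SS S_props by auto
    define R where "R = {v. \<exists>es. gwalk (\<lambda>e. e \<in> F) tail head (head s) es v}"
    have "R \<inter> T \<noteq> {}"
    proof
      assume RT: "R \<inter> T = {}"
      have "R \<subseteq> W" unfolding R_def using fwalk_W sW FE by blast
      hence fs: "card {e\<in>F. head e \<in> R} + card {x\<in>insert s S0. head x \<in> R} = card {e\<in>F. tail e \<in> R}"
        using flow_sum[OF insert.prems] RT by blast
      have "{e\<in>F. tail e \<in> R} \<subseteq> {e\<in>F. head e \<in> R}"
      proof
        fix e assume e: "e \<in> {e\<in>F. tail e \<in> R}"
        then obtain es where "gwalk (\<lambda>e. e \<in> F) tail head (head s) es (tail e)" unfolding R_def by blast
        hence "gwalk (\<lambda>e. e \<in> F) tail head (head s) (es @ [e]) (head e)" using e by (auto simp: gwalk_append)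
        thus "e \<in> {e\<in>F. head e \<in> R}" using e unfolding R_def by blast
      qed
      hence "card {e\<in>F. tail e \<in> R} \<le> card {e\<in>F. head e \<in> R}" using fF by (simp add: card_mono)
      hence "card {x\<in>insert s S0. head x \<in> R} = 0" using fs by linarith
      moreover have "head s \<in> R" unfolding R_def by (auto intro: exI[of _ "[]"])
      moreover have "finite {x\<in>insert s S0. head x \<in> R}" using insert.hyps(1) by simp
      ultimately show False by (metis (no_types, lifting) card_0_eq empty_iff insertI1 mem_Collect_eq)
    qed
    then obtain es v where w: "gwalk (\<lambda>e. e \<in> F) tail head (head s) es v" "v \<in> T" unfolding R_def by blast
    from gwalk_shorten[OF w] obtain ps t where p: "gwalk (\<lambda>e. e \<in> F) tail head (head s) ps t" "t \<in> T"
      "distinct (map tail ps)" "\<forall>x\<in>set ps. tail x \<notin> T" by blast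
    have psF: "set ps \<subseteq> F" using fwalk_W[OF p(1) sW FE] by blast
    have dps: "distinct ps" using p(3) distinct_map by blast
    define F' where "F' = F - set ps"
    have "isflow F' S0"
      unfolding isflow_def
    proof (intro conjI ballI)
      show "finite F'" "F' \<subseteq> E" "S0 \<subseteq> S" using fF FE SS F'_def by auto
      fix x assume x: "x \<in> W - T"
      have "exc F' S0 x = exc F (insert s S0) x - (if head s = x then 1 else 0)
          - (int (card {e\<in>set ps. head e = x}) - int (card {e\<in>set ps. tail e = x}))"
        using exc_insert_src[OF insert.hyps(1,2), of F x] unfolding exc_def F'_def
        using card_diff_filter[OF fF psF] by simp
      also have "\<dots> = - (if x = t then 1 else 0)" using fwalk_count[OF p(1) dps, of x] cons x by auto
      also have "\<dots> = 0" using x p(2) by auto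
      finally show "exc F' S0 x = 0" .
    qed
    from insert.IH[OF this] obtain P0 where P0:
      "\<forall>s\<in>S0. set (P0 s) \<subseteq> F' \<and> distinct (map tail (P0 s)) \<and> (\<forall>x\<in>set (P0 s). tail x \<notin> T) \<and>
              (\<exists>v\<in>T. gwalk (\<lambda>e. e \<in> F') tail head (head s) (P0 s) v)"
      "\<forall>s\<in>S0. \<forall>s'\<in>S0. s \<noteq> s' \<longrightarrow> set (P0 s) \<inter> set (P0 s') = {}" by blast
    have mono: "gwalk (\<lambda>e. e \<in> F) tail head u qs v'" if "gwalk (\<lambda>e. e \<in> F') tail head u qs v'" for u qs v'
      using gwalk_mono[OF that] F'_def by auto
    define P where "P = P0(s := ps)"
    have A: "\<forall>s'\<in>insert s S0. set (P s') \<subseteq> F \<and> distinct (map tail (P s')) \<and> (\<forall>x\<in>set (P s'). tail x \<notin> T) \<and>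
              (\<exists>v\<in>T. gwalk (\<lambda>e. e \<in> F) tail head (head s') (P s') v)"
    proof
      fix s' assume s': "s' \<in> insert s S0"
      show "set (P s') \<subseteq> F \<and> distinct (map tail (P s')) \<and> (\<forall>x\<in>set (P s'). tail x \<notin> T) \<and>
              (\<exists>v\<in>T. gwalk (\<lambda>e. e \<in> F) tail head (head s') (P s') v)"
      proof (cases "s' = s")
        case True
        then show ?thesis using p psF P_def by auto
      next
        case False
        hence s0: "s' \<in> S0" using s' by auto
        have "P s' = P0 s'" using False P_def by simp
        moreover have "set (P0 s') \<subseteq> F" using P0(1) s0 F'_def by blast
        moreover obtain v where "v \<in> T" "gwalk (\<lambda>e. e \<in> F') tail head (head s') (P0 s') v" using P0(1) s0 by blast
        ultimately show ?thesis using P0(1) s0 mono by metis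
      qed
    qed
    have B: "\<forall>s1\<in>insert s S0. \<forall>s2\<in>insert s S0. s1 \<noteq> s2 \<longrightarrow> set (P s1) \<inter> set (P s2) = {}"
    proof (intro ballI impI)
      fix s1 s2 assume s12: "s1 \<in> insert s S0" "s2 \<in> insert s S0" "s1 \<noteq> s2"
      show "set (P s1) \<inter> set (P s2) = {}"
        using s12 P0 P_def F'_def insert.hyps(2) by (cases "s1 = s"; cases "s2 = s") auto
    qed
    show ?case using A B by blast
  qed
qed

end



lemma gwalk_verts: "gwalk (\<lambda>e. e \<in> F) tail head u es v \<Longrightarrow> path_verts head u es = map tail es @ [v]"
  by (induction es arbitrary: u) (auto simp: path_verts_def)

context mg begin

lemma exists_good: "\<exists>P. good_path_system tail head H W T P"
proof -
  obtain F where fl: "isflow F S" using flow_exists by blast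
  have FE: "F \<subseteq> E" using fl by (simp add: isflow_def)
  from decompose[OF fl] obtain P where P:
    "\<forall>s\<in>S. set (P s) \<subseteq> F \<and> distinct (map tail (P s)) \<and> (\<forall>x\<in>set (P s). tail x \<notin> T) \<and>
              (\<exists>v\<in>T. gwalk (\<lambda>e. e \<in> F) tail head (head s) (P s) v)"
    "\<forall>s\<in>S. \<forall>s'\<in>S. s \<noteq> s' \<longrightarrow> set (P s) \<inter> set (P s') = {}" by blast
  define Q where "Q s = (head s, P s)" for s
  have one: "is_path tail head W (induced_edges tail head H W) (Q s) \<and> goes_from_to head (Q s) {head s} T"
    if s: "s \<in> S" for s
  proof -
    obtain v where v: "v \<in> T" "gwalk (\<lambda>e. e \<in> F) tail head (head s) (P s) v" using P(1) s by blast
    have pv: "path_verts head (head s) (P s) = map tail (P s) @ [v]" using gwalk_verts[OF v(2)] .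
    have sub: "set (P s) \<subseteq> E" using P(1) s FE by blast
    have hsW: "head s \<in> W" using s S_props by blast
    have vW: "v \<in> W" using v(1) TW by blast
    have "set (path_verts head (head s) (P s)) \<subseteq> W"
      using hsW sub E_props by (auto simp: path_verts_def)
    moreover have "\<forall>i < length (P s). tail (P s ! i) = path_verts head (head s) (P s) ! i"
      using pv by (simp add: nth_append)
    moreover have "distinct (path_verts head (head s) (P s))"
      using pv P(1) s v(1) by auto
    moreover have "set (path_verts head (head s) (P s)) \<inter> {head s} = {head s}"
      by (simp add: path_verts_def)
    moreover have "set (path_verts head (head s) (P s)) \<inter> T = {v}"
      using pv P(1) s v(1) by auto
    moreover have "path_end head (Q s) = v" using pv by (simp add: path_end_def Q_def)
    ultimately show ?thesis using sub unfolding is_path_def goes_from_to_def Q_def path_start_def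
      by (simp add: E_def)
  qed
  have "good_path_system tail head H W T Q"
    unfolding good_path_system_def
  proof (intro conjI ballI impI)
    fix e assume "e \<in> in_edges tail head H W"
    thus "is_path tail head W (induced_edges tail head H W) (Q e)" "goes_from_to head (Q e) {head e} T"
      using one S_def by auto
  next
    fix e e' assume "e \<in> in_edges tail head H W" "e' \<in> in_edges tail head H W" "e \<noteq> e'"
    thus "set (snd (Q e)) \<inter> set (snd (Q e')) = {}" using P(2) S_def Q_def by auto
  qed
  thus ?thesis by blast
qed

end




lemma partB:
  assumes B1B0: "B1 \<subseteq> B0" and fin0: "finite (in_edges tail head H B0)"
    and fin1: "finite (in_edges tail head H B1)"
    and ceq: "card (in_edges tail head H B0) = card (in_edges tail head H B1)"
    and good: "good_path_system tail head H B0 B1 P"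
  shows "(\<forall>e\<in>H. tail e \<in> B0 - B1 \<and> head e \<in> B1 \<longrightarrow>
               (\<exists>e0\<in>in_edges tail head H B0. e \<in> set (snd (P e0)))) \<and>
            image_mset (\<lambda>e0. path_end head (P e0)) (mset_set (in_edges tail head H B0))
              = image_mset head (mset_set (in_edges tail head H B1))"
proof -
  let ?S = "in_edges tail head H B0" and ?S1 = "in_edges tail head H B1"
  have gd1: "\<forall>e\<in>?S. is_path tail head B0 (induced_edges tail head H B0) (P e) \<and> goes_from_to head (P e) {head e} B1"
    and gd2: "\<forall>e\<in>?S. \<forall>e'\<in>?S. e \<noteq> e' \<longrightarrow> set (snd (P e)) \<inter> set (snd (P e')) = {}"
    using good unfolding good_path_system_def by blast+
  define g where "g s = (if snd (P s) = [] then s else last (snd (P s)))" for s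
  have key: "g s \<in> ?S1 \<and> path_end head (P s) = head (g s) \<and> (snd (P s) \<noteq> [] \<longrightarrow> g s \<in> induced_edges tail head H B0)"
    if s: "s \<in> ?S" for s
  proof -
    obtain u es where Ps: "P s = (u, es)" by force
    have ip: "is_path tail head B0 (induced_edges tail head H B0) (u, es)"
      and gf: "goes_from_to head (u, es) {head s} B1" using gd1 s Ps by metis+
    let ?vs = "path_verts head u es"
    have u: "u = head s" using gf by (auto simp: goes_from_to_def path_start_def path_verts_def)
    have pe: "path_end head (P s) = last ?vs" by (simp add: Ps path_end_def)
    have lastB1: "last ?vs \<in> B1" and onlyB1: "\<forall>x\<in>set ?vs. x \<in> B1 \<longrightarrow> x = last ?vs"
      using gf by (auto simp: goes_from_to_def path_end_def path_verts_def)
    have sH: "s \<in> H" "tail s \<notin> B0" "head s \<in> B0" using s by (auto simp: in_edges_def)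
    show ?thesis
    proof (cases "es = []")
      case True
      hence "g s = s" by (simp add: g_def Ps)
      moreover have "head s \<in> B1" using lastB1 True u by (simp add: path_verts_def)
      ultimately show ?thesis using sH B1B0 pe True u Ps by (auto simp: in_edges_def path_verts_def)
    next
      case False
      hence gs: "g s = last es" by (simp add: g_def Ps)
      have lin: "last es \<in> set es" using False by simp
      hence ind: "last es \<in> induced_edges tail head H B0" using ip by (auto simp: is_path_def)
      have lv: "last ?vs = head (last es)" using False by (simp add: path_verts_def last_map)
      have n: "length es - 1 < length es" using False by simp
      have lastes: "last es = es ! (length es - 1)" using False by (simp add: last_conv_nth)
      have tl: "tail (last es) = ?vs ! (length es - 1)"
        using ip n lastes by (auto simp: is_path_def)
      have dist: "distinct ?vs" using ip by (simp add: is_path_def)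
      have len: "length ?vs = Suc (length es)" by (simp add: path_verts_def)
      have "?vs \<noteq> []" by (simp add: path_verts_def)
      hence "last ?vs = ?vs ! (length es)" using len last_conv_nth[of ?vs] by simp
      moreover have i1: "length es - 1 < length ?vs" "length es < length ?vs" using len by auto
      moreover have "length es - 1 \<noteq> length es" using n by linarith
      ultimately have "tail (last es) \<noteq> last ?vs" using tl nth_eq_iff_index_eq[OF dist i1] by metis
      moreover have "tail (last es) \<in> set ?vs" using tl len n by simp
      ultimately have "tail (last es) \<notin> B1" using onlyB1 by blast
      moreover have "head (last es) \<in> B1" using lastB1 lv by simp
      ultimately show ?thesis using gs ind pe lv by (auto simp: in_edges_def induced_edges_def)
    qed
  qed
  have notind: "s \<notin> induced_edges tail head H B0" if "s \<in> ?S" for s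
    using that by (auto simp: in_edges_def induced_edges_def)
  have inj: "inj_on g ?S"
  proof (rule inj_onI)
    fix s s' assume ss: "s \<in> ?S" "s' \<in> ?S" "g s = g s'"
    show "s = s'"
    proof (rule ccontr)
      assume ne: "s \<noteq> s'"
      have disj: "set (snd (P s)) \<inter> set (snd (P s')) = {}" using gd2 ss ne by blast
      show False
      proof (cases "snd (P s) = []"; cases "snd (P s') = []")
        assume "snd (P s) = []" "snd (P s') = []"
        thus False using ss ne by (simp add: g_def)
      next
        assume a: "snd (P s) = []" "snd (P s') \<noteq> []"
        thus False using ss key[of s'] notind[of s] by (simp add: g_def)
      next
        assume a: "snd (P s) \<noteq> []" "snd (P s') = []"
        thus False using ss key[of s] notind[of s'] by (simp add: g_def)
      next
        assume a: "snd (P s) \<noteq> []" "snd (P s') \<noteq> []"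
        hence "g s \<in> set (snd (P s))" "g s' \<in> set (snd (P s'))" by (simp_all add: g_def)
        thus False using ss(3) disj by auto
      qed
    qed
  qed
  have img: "g ` ?S = ?S1"
  proof (rule card_subset_eq[OF fin1])
    show "g ` ?S \<subseteq> ?S1"
    proof (rule image_subsetI)
      fix x assume "x \<in> ?S"
      from key[OF this] show "g x \<in> ?S1" by (rule conjunct1)
    qed
    show "card (g ` ?S) = card ?S1" using card_image[OF inj] ceq by (rule trans)
  qed
  have A: "\<forall>e\<in>H. tail e \<in> B0 - B1 \<and> head e \<in> B1 \<longrightarrow> (\<exists>e0\<in>?S. e \<in> set (snd (P e0)))"
  proof (intro ballI impI)
    fix e assume e: "e \<in> H" "tail e \<in> B0 - B1 \<and> head e \<in> B1"
    hence "e \<in> ?S1" by (auto simp: in_edges_def)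
    hence "e \<in> g ` ?S" using img by (rule ssubst[where P="\<lambda>A. e \<in> A", rotated])
    then obtain s where s: "s \<in> ?S" "g s = e" by (rule imageE) (rule that, assumption, rule sym)
    have "snd (P s) \<noteq> []"
    proof
      assume "snd (P s) = []"
      hence "e = s" using s by (simp add: g_def)
      thus False using s(1) e by (auto simp: in_edges_def)
    qed
    hence "g s = last (snd (P s))" "last (snd (P s)) \<in> set (snd (P s))" by (simp_all add: g_def)
    hence "e \<in> set (snd (P s))" using s(2) by simp
    thus "\<exists>e0\<in>?S. e \<in> set (snd (P e0))" using s by blast
  qed
  have "image_mset (\<lambda>e0. path_end head (P e0)) (mset_set ?S) = image_mset (\<lambda>e0. head (g e0)) (mset_set ?S)"
  proof (rule image_mset_cong)
    fix x assume "x \<in># mset_set ?S"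
    hence "x \<in> ?S" using fin0 by simp
    thus "path_end head (P x) = head (g x)" using key by blast
  qed
  also have "\<dots> = image_mset head (image_mset g (mset_set ?S))" by (simp add: multiset.map_comp o_def)
  also have "\<dots> = image_mset head (mset_set ?S1)" using image_mset_mset_set[OF inj] img by simp
  finally show ?thesis using A by blast
qed




theorem corollary2:
  fixes V :: "'v set" and A :: "'e set" and tail head :: "'e \<Rightarrow> 'v"
    and k :: nat and Vs :: "nat \<Rightarrow> 'v set" and As :: "nat \<Rightarrow> 'e set"
    and B0 B1 :: "'v set" and l :: nat
  assumes digraph: "\<forall>e\<in>A. tail e \<in> V \<and> head e \<in> V"
    and branchings: "\<forall>i<k. Vs i \<subseteq> V \<and> As i \<subseteq> A \<and> branching tail head (Vs i) (As i)"
    and disjoint: "\<forall>i<k. \<forall>j<k. i \<noteq> j \<longrightarrow> As i \<inter> As j = {}"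
    and cond: "\<forall>X. X \<subseteq> V \<and> X \<noteq> {} \<longrightarrow>
                 rho tail head (rest_edges A As k) X \<ge> enat (card {i. i < k \<and> Vs i \<inter> X = {}})"
    and B1B0: "B1 \<subseteq> B0"
    and dB0: "dangerous tail head V A k Vs As B0"
    and dB1: "dangerous tail head V A k Vs As B1"
    and rB0: "rho tail head (rest_edges A As k) B0 = enat l"
    and rB1: "rho tail head (rest_edges A As k) B1 = enat l"
    and l1: "l \<ge> 1"
  shows "(\<exists>P. good_path_system tail head (rest_edges A As k) B0 B1 P) \<and>
         (\<forall>P. good_path_system tail head (rest_edges A As k) B0 B1 P \<longrightarrow>
            (\<forall>e\<in>rest_edges A As k. tail e \<in> B0 - B1 \<and> head e \<in> B1 \<longrightarrow>
               (\<exists>e0\<in>in_edges tail head (rest_edges A As k) B0. e \<in> set (snd (P e0)))) \<and>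
            image_mset (\<lambda>e0. path_end head (P e0)) (mset_set (in_edges tail head (rest_edges A As k) B0))
              = image_mset head (mset_set (in_edges tail head (rest_edges A As k) B1)))"
proof -
  define H where "H = rest_edges A As k"
  have t0: "B0 \<noteq> {}" "B0 \<subseteq> V" "rho tail head H B0 = enat (card {i. i < k \<and> Vs i \<inter> B0 = {}})"
    using dB0 unfolding dangerous_def tight_def H_def by blast+
  have t1: "B1 \<noteq> {}" using dB1 unfolding dangerous_def tight_def by blast
  have c0: "card {i. i < k \<and> Vs i \<inter> B0 = {}} = l" using t0(3) rB0 H_def by simp
  have fin0: "finite (in_edges tail head H B0)" and card0: "card (in_edges tail head H B0) = l"
    using rB0 unfolding H_def[symmetric] rho_def by (auto split: if_splits)
  have fin1: "finite (in_edges tail head H B1)" and card1: "card (in_edges tail head H B1) = l"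
    using rB1 unfolding H_def[symmetric] rho_def by (auto split: if_splits)
  interpret m: mg tail head H B0 B1
  proof
    show "B1 \<subseteq> B0" by (rule B1B0)
    show "finite (in_edges tail head H B0)" by (rule fin0)
    fix X assume X: "B1 \<subseteq> X" "X \<subseteq> B0"
    have "X \<subseteq> V \<and> X \<noteq> {}" using X t0 t1 by blast
    hence r: "enat (card {i. i < k \<and> Vs i \<inter> X = {}}) \<le> rho tail head H X" using cond H_def by blast
    have "{i. i < k \<and> Vs i \<inter> B0 = {}} \<subseteq> {i. i < k \<and> Vs i \<inter> X = {}}" using X by blast
    moreover have "finite {i. i < k \<and> Vs i \<inter> X = {}}" by simp
    ultimately have "card {i. i < k \<and> Vs i \<inter> B0 = {}} \<le> card {i. i < k \<and> Vs i \<inter> X = {}}"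
      by (rule card_mono[rotated])
    hence "enat l \<le> enat (card {i. i < k \<and> Vs i \<inter> X = {}})" using c0 by simp
    hence "enat l \<le> rho tail head H X" using r by (rule order_trans)
    thus "enat (card (in_edges tail head H B0)) \<le> rho tail head H X" using card0 by simp
  qed
  have E: "\<exists>P. good_path_system tail head H B0 B1 P" by (rule m.exists_good)
  have F: "\<forall>P. good_path_system tail head H B0 B1 P \<longrightarrow>
            (\<forall>e\<in>H. tail e \<in> B0 - B1 \<and> head e \<in> B1 \<longrightarrow>
               (\<exists>e0\<in>in_edges tail head H B0. e \<in> set (snd (P e0)))) \<and>
            image_mset (\<lambda>e0. path_end head (P e0)) (mset_set (in_edges tail head H B0))
              = image_mset head (mset_set (in_edges tail head H B1))"
  proof (intro allI impI)
    fix P assume "good_path_system tail head H B0 B1 P"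
    from partB[OF B1B0 fin0 fin1 _ this] card0 card1
    show "(\<forall>e\<in>H. tail e \<in> B0 - B1 \<and> head e \<in> B1 \<longrightarrow>
               (\<exists>e0\<in>in_edges tail head H B0. e \<in> set (snd (P e0)))) \<and>
            image_mset (\<lambda>e0. path_end head (P e0)) (mset_set (in_edges tail head H B0))
              = image_mset head (mset_set (in_edges tail head H B1))" by simp
  qed
  show ?thesis using E F unfolding H_def by blast
qed


end
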